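(* Let $m\ge 3$ and $H=\Theta(l_1,\ldots,l_m)$ with $l_1=\cdots=l_m=4$, and let $G=H^2$. Then $G$ is equitably $(m+2)$-choosable.
   Context: $\Theta(l_1,\ldots,l_m)$ denotes the graph consisting of two vertices $u,w$ joined by $m$ internally disjoint paths of lengths $l_1,\ldots,l_m$. For a graph $H$, $H^2$ has vertex set $V(H)$ with two vertices adjacent iff their distance in $H$ is 1 or 2. A $k$-assignment $L$ assigns to each vertex a set of exactly $k$ colors; an equitable $L$-coloring of $G$ is a proper coloring $f$ with $f(v)\in L(v)$ such that no color is used more than $\lceil |V(G)|/k\rceil$ times; $G$ is equitably $k$-choosable if it has an equitable $L$-coloring for every $k$-assignment $L$. *)

theory Defs
  imports Main "HOL-Library.Multiset" Complex_Main
begin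

text \<open>Simple graphs are given by a finite vertex set V and an adjacency
relation E (symmetric, irreflexive, on V).\<close>

text \<open>Vertices of a theta graph: the two branch vertices u, w and
internal vertex j (1 <= j <= l_i - 1) of path i.\<close>
datatype tvert = TU | TW | TP nat nat

definition theta_V :: "nat list \<Rightarrow> tvert set" where
  "theta_V ls = {TU, TW} \<union> {TP i j | i j. i < length ls \<and> 1 \<le> j \<and> j < ls ! i}"

definition theta_pv :: "nat list \<Rightarrow> nat \<Rightarrow> nat \<Rightarrow> tvert" where
  "theta_pv ls i j = (if j = 0 then TU else if j = ls ! i then TW else TP i j)"

definition theta_E :: "nat list \<Rightarrow> tvert \<Rightarrow> tvert \<Rightarrow> bool" where
  "theta_E ls x y = (x \<noteq> y \<and> (\<exists>i < length ls. \<exists>j < ls ! i.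
      {x, y} = {theta_pv ls i j, theta_pv ls i (Suc j)}))"

definition square_E :: "'a set \<Rightarrow> ('a \<Rightarrow> 'a \<Rightarrow> bool) \<Rightarrow> 'a \<Rightarrow> 'a \<Rightarrow> bool" where
  "square_E V E x y = (x \<in> V \<and> y \<in> V \<and> x \<noteq> y \<and>
      (E x y \<or> (\<exists>z \<in> V. E x z \<and> E z y)))"

definition k_assignment :: "'a set \<Rightarrow> nat \<Rightarrow> ('a \<Rightarrow> 'c set) \<Rightarrow> bool" where
  "k_assignment V k L = (\<forall>v \<in> V. finite (L v) \<and> card (L v) = k)"

definition equitable_L_coloring ::
  "'a set \<Rightarrow> ('a \<Rightarrow> 'a \<Rightarrow> bool) \<Rightarrow> nat \<Rightarrow> ('a \<Rightarrow> 'c set) \<Rightarrow> ('a \<Rightarrow> 'c) \<Rightarrow> bool" where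
  "equitable_L_coloring V E k L f =
     ((\<forall>v \<in> V. f v \<in> L v) \<and>
      (\<forall>x \<in> V. \<forall>y \<in> V. E x y \<longrightarrow> f x \<noteq> f y) \<and>
      (\<forall>c. int (card {v \<in> V. f v = c}) \<le> \<lceil>real (card V) / real k\<rceil>))"

text \<open>Colours are taken to be natural numbers (no loss of generality:
only finitely many colours occur in a k-assignment of a finite graph).\<close>
definition equitably_choosable :: "'a set \<Rightarrow> ('a \<Rightarrow> 'a \<Rightarrow> bool) \<Rightarrow> nat \<Rightarrow> bool" where
  "equitably_choosable V E k =
     (\<forall>L :: 'a \<Rightarrow> nat set. k_assignment V k L \<longrightarrow>
        (\<exists>f. equitable_L_coloring V E k L f))"

end

theory Submission
  imports Defs
begin


lemma greedy:
  fixes V :: "'a set" and pos :: "'a \<Rightarrow> nat" and R :: "'a \<Rightarrow> 'a \<Rightarrow> bool"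
    and L :: "'a \<Rightarrow> 'c set"
  assumes fin: "finite V" and inj: "inj_on pos V"
    and L: "\<forall>v\<in>V. finite (L v) \<and> card (L v) = k"
    and symR: "\<And>x y. R x y \<Longrightarrow> R y x"
    and small: "\<forall>v\<in>V. card {x\<in>V. pos x < pos v \<and> R x v} < k"
  shows "\<exists>f. (\<forall>v\<in>V. f v \<in> L v) \<and> (\<forall>x\<in>V. \<forall>y\<in>V. x \<noteq> y \<and> R x y \<longrightarrow> f x \<noteq> f y)"
proof -
  have "\<exists>f. (\<forall>v\<in>V. pos v < n \<longrightarrow> f v \<in> L v) \<and>
     (\<forall>x\<in>V. \<forall>y\<in>V. pos x < n \<and> pos y < n \<and> x \<noteq> y \<and> R x y \<longrightarrow> f x \<noteq> f y)" for n
  proof (induction n)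
    case 0
    then show ?case by auto
  next
    case (Suc n)
    then obtain f where f1: "\<forall>v\<in>V. pos v < n \<longrightarrow> f v \<in> L v"
      and f2: "\<forall>x\<in>V. \<forall>y\<in>V. pos x < n \<and> pos y < n \<and> x \<noteq> y \<and> R x y \<longrightarrow> f x \<noteq> f y"
      by blast
    show ?case
    proof (cases "\<exists>v\<in>V. pos v = n")
      case False
      then have lt: "\<And>v. v \<in> V \<Longrightarrow> pos v < Suc n \<Longrightarrow> pos v < n"
        using less_SucE by blast
      show ?thesis
        apply (rule exI[of _ f])
        using f1 f2 lt by simp
    next
      case True
      then obtain v where v: "v \<in> V" "pos v = n" by blast
      define S where "S = {x\<in>V. pos x < pos v \<and> R x v}"
      have "finite S" using fin S_def by auto
      have "card (f ` S) \<le> card S" by (rule card_image_le) fact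
      also have "\<dots> < k" using small v S_def by auto
      finally have "card (f ` S) < card (L v)" using L v by auto
      have "\<not> L v \<subseteq> f ` S"
      proof
        assume "L v \<subseteq> f ` S"
        then have "card (L v) \<le> card (f ` S)"
          using \<open>finite S\<close> by (simp add: card_mono)
        then show False using \<open>card (f ` S) < card (L v)\<close> by simp
      qed
      then obtain c where c: "c \<in> L v" "c \<notin> f ` S" by blast
      define g where "g = f(v := c)"
      have uniq: "\<And>x. x \<in> V \<Longrightarrow> pos x < Suc n \<Longrightarrow> x \<noteq> v \<Longrightarrow> pos x < n"
      proof -
        fix x assume "x \<in> V" "pos x < Suc n" "x \<noteq> v"
        have "pos x \<noteq> n"
        proof
          assume "pos x = n"
          then have "pos x = pos v" using v by simp
          then have "x = v" using inj_onD[OF inj] \<open>x \<in> V\<close> v(1) by blast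
          then show False using \<open>x \<noteq> v\<close> by simp
        qed
        then show "pos x < n" using \<open>pos x < Suc n\<close> by simp
      qed
      have g1: "\<forall>x\<in>V. pos x < Suc n \<longrightarrow> g x \<in> L x"
        using f1 c uniq g_def by auto
      have g2: "\<forall>x\<in>V. \<forall>y\<in>V. pos x < Suc n \<and> pos y < Suc n \<and> x \<noteq> y \<and> R x y \<longrightarrow> g x \<noteq> g y"
      proof (intro ballI impI)
        fix x y assume xy: "x \<in> V" "y \<in> V" "pos x < Suc n \<and> pos y < Suc n \<and> x \<noteq> y \<and> R x y"
        show "g x \<noteq> g y"
        proof (cases "x = v")
          case True
          then have "y \<in> S" using xy uniq v S_def symR by auto
          then show ?thesis using True xy c g_def by auto
        next
          case False
          note xv = this
          show ?thesis
          proof (cases "y = v")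
            case True
            then have "x \<in> S" using xy uniq v S_def xv by auto
            then show ?thesis using True xy c g_def by auto
          next
            case False
            then show ?thesis using xv xy f2 uniq g_def by auto
          qed
        qed
      qed
      show ?thesis using g1 g2 by blast
    qed
  qed
  from this[of "Suc (Max (pos ` V))"] obtain f where
    "\<forall>v\<in>V. pos v < Suc (Max (pos ` V)) \<longrightarrow> f v \<in> L v"
    "\<forall>x\<in>V. \<forall>y\<in>V. pos x < Suc (Max (pos ` V)) \<and> pos y < Suc (Max (pos ` V)) \<and> x \<noteq> y \<and> R x y \<longrightarrow> f x \<noteq> f y"
    by blast
  moreover have "\<And>v. v \<in> V \<Longrightarrow> pos v < Suc (Max (pos ` V))"
    using fin by (simp add: le_imp_less_Suc)
  ultimately show ?thesis by blast
qed



lemma memV: "x \<in> theta_V (replicate m 4) \<longleftrightarrow>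
   x = TU \<or> x = TW \<or> (\<exists>i j. x = TP i j \<and> i < m \<and> 1 \<le> j \<and> j \<le> 3)"
  unfolding theta_V_def by auto

lemma thE:
  assumes "theta_E (replicate m 4) x y"
  shows "\<exists>i<m. (x = TU \<and> y = TP i 1) \<or> (y = TU \<and> x = TP i 1) \<or>
     (x = TP i 1 \<and> y = TP i 2) \<or> (y = TP i 1 \<and> x = TP i 2) \<or>
     (x = TP i 2 \<and> y = TP i 3) \<or> (y = TP i 2 \<and> x = TP i 3) \<or>
     (x = TP i 3 \<and> y = TW) \<or> (y = TP i 3 \<and> x = TW)"
proof -
  from assms obtain i j where ij: "i < m" "j < 4"
    "{x, y} = {theta_pv (replicate m 4) i j, theta_pv (replicate m 4) i (Suc j)}"
    unfolding theta_E_def by auto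
  have "j = 0 \<or> j = 1 \<or> j = 2 \<or> j = 3" using ij by auto
  then show ?thesis using ij
    by (auto simp: theta_pv_def doubleton_eq_iff)
qed

fun near :: "tvert \<Rightarrow> tvert \<Rightarrow> bool" where
  "near TU (TP i j) = (j = 1 \<or> j = 2)"
| "near (TP i j) TU = (j = 1 \<or> j = 2)"
| "near TW (TP i j) = (j = 2 \<or> j = 3)"
| "near (TP i j) TW = (j = 2 \<or> j = 3)"
| "near (TP i j) (TP i' j') = (i = i' \<or> (j = 1 \<and> j' = 1) \<or> (j = 3 \<and> j' = 3))"
| "near _ _ = False"

lemma sq_near:
  assumes "square_E (theta_V (replicate m 4)) (theta_E (replicate m 4)) x y"
  shows "near x y"
proof -
  have xy: "x \<noteq> y" using assms unfolding square_E_def by auto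
  consider "theta_E (replicate m 4) x y" | z where
    "theta_E (replicate m 4) x z" "theta_E (replicate m 4) z y"
    using assms unfolding square_E_def by auto
  then show ?thesis
  proof cases
    case 1
    then show ?thesis using thE by fastforce
  next
    case 2
    from thE[OF 2(1)] obtain i where "i < m" and
      A: "(x = TU \<and> z = TP i 1) \<or> (z = TU \<and> x = TP i 1) \<or>
     (x = TP i 1 \<and> z = TP i 2) \<or> (z = TP i 1 \<and> x = TP i 2) \<or>
     (x = TP i 2 \<and> z = TP i 3) \<or> (z = TP i 2 \<and> x = TP i 3) \<or>
     (x = TP i 3 \<and> z = TW) \<or> (z = TP i 3 \<and> x = TW)" by blast
    from thE[OF 2(2)] obtain i' where "i' < m" and
      B: "(z = TU \<and> y = TP i' 1) \<or> (y = TU \<and> z = TP i' 1) \<or>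
     (z = TP i' 1 \<and> y = TP i' 2) \<or> (y = TP i' 1 \<and> z = TP i' 2) \<or>
     (z = TP i' 2 \<and> y = TP i' 3) \<or> (y = TP i' 2 \<and> z = TP i' 3) \<or>
     (z = TP i' 3 \<and> y = TW) \<or> (y = TP i' 3 \<and> z = TW)" by blast
    from A B xy show ?thesis by auto
  qed
qed

fun pos :: "nat \<Rightarrow> tvert \<Rightarrow> nat" where
  "pos m TU = 0"
| "pos m TW = 1"
| "pos m (TP i j) =
   (if j = 1 then (if i = 0 then 2 else if i = 1 then 3 else if i = m - 1 then 2*m+3 else i+6)
    else if j = 2 then (if i = 0 then 4 else if i = 1 then 5 else 2*m+i+2)
    else (if i = 0 then 6 else if i = 1 then 7 else m+i+3))"

fun blk :: "nat \<Rightarrow> tvert \<Rightarrow> nat" where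
  "blk m TU = 0"
| "blk m TW = 0"
| "blk m (TP i j) =
   (if j = 1 then (if i = m - 1 then 2 else 0)
    else if j = 2 then (if i = 0 then 0 else if i = 1 then 1 else 2)
    else 1)"

definition decode :: "nat \<Rightarrow> nat \<Rightarrow> tvert" where
  "decode m p = (if p = 0 then TU else if p = 1 then TW else if p = 2 then TP 0 1
     else if p = 3 then TP 1 1 else if p = 4 then TP 0 2 else if p = 5 then TP 1 2
     else if p = 6 then TP 0 3 else if p = 7 then TP 1 3
     else if p \<le> m + 4 then TP (p - 6) 1 else if p \<le> 2*m+2 then TP (p - m - 3) 3
     else if p = 2*m+3 then TP (m - 1) 1 else TP (p - 2*m - 2) 2)"

lemma decode_pos:
  assumes "3 \<le> m" "x \<in> theta_V (replicate m 4)"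
  shows "decode m (pos m x) = x"
proof -
  consider "x = TU" | "x = TW" | i j where "x = TP i j" "i < m" "j = 1 \<or> j = 2 \<or> j = 3"
    using assms(2) unfolding memV by force
  then show ?thesis
  proof cases
    case 3
    consider "i = 0" | "i = 1" | "i = m - 1" | "i \<noteq> 0" "i \<noteq> 1" "i \<noteq> m - 1" by blast
    then show ?thesis using 3 assms(1)
      by cases (auto simp: decode_def)
  qed (auto simp: decode_def)
qed

lemma inj_pos: assumes "3 \<le> m" shows "inj_on (pos m) (theta_V (replicate m 4))"
  by (rule inj_on_inverseI[where g = "decode m"]) (rule decode_pos[OF assms])

definition W :: "nat \<Rightarrow> tvert \<Rightarrow> tvert set" where
  "W m v = {x \<in> theta_V (replicate m 4). pos m x < pos m v \<and>
      (blk m x = blk m v \<or> near x v \<or> near v x)}"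


lemma Vcases:
  assumes "x \<in> theta_V (replicate m 4)"
  obtains "x = TU" | "x = TW" | i where "x = TP i 1" "i < m" | i where "x = TP i 2" "i < m"
    | i where "x = TP i 3" "i < m"
proof -
  from assms consider "x = TU" | "x = TW" | i j where "x = TP i j" "i < m" "j = 1 \<or> j = 2 \<or> j = 3"
    unfolding memV by force
  then show ?thesis using that by cases auto
qed

lemma card_ins: "card (insert a A) \<le> Suc (card A)"
  by (cases "finite A") (auto simp: card_insert_if)

lemma Wsub: "W m v \<subseteq> T \<Longrightarrow> finite T \<Longrightarrow> card T \<le> m + 1 \<Longrightarrow> card (W m v) \<le> m + 1"
  by (meson card_mono order_trans)

lemma Wmem: "x \<in> W m v \<Longrightarrow> x \<in> theta_V (replicate m 4) \<and> pos m x < pos m v \<and>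
      (blk m x = blk m v \<or> near x v \<or> near v x)"
  by (simp add: W_def)

lemma W_small:
  assumes "3 \<le> m" shows "card (W m v) \<le> pos m v"
proof -
  have "card (W m v) = card (pos m ` W m v)"
    by (rule card_image[symmetric], rule inj_on_subset[OF inj_pos[OF assms]]) (auto simp: W_def)
  also have "\<dots> \<le> card {..<pos m v}"
    by (rule card_mono) (auto simp: W_def)
  finally show ?thesis by simp
qed

lemma cost_b1: assumes "3 \<le> m" shows "card (W m (TP 1 2)) \<le> m + 1"
proof (rule Wsub[where T = "{TU, TW, TP 1 1}"])
  show "W m (TP 1 2) \<subseteq> {TU, TW, TP 1 1}"
  proof
    fix x assume "x \<in> W m (TP 1 2)"
    note x = Wmem[OF this]
    then show "x \<in> {TU, TW, TP 1 1}" using assms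
      by (elim conjE Vcases) (auto split: if_splits)
  qed
  show "card {TU, TW, TP 1 1} \<le> m + 1" using assms by simp
qed simp

lemma cost_c0: assumes "3 \<le> m" shows "card (W m (TP 0 3)) \<le> m + 1"
proof (rule Wsub[where T = "{TW, TP 1 2, TP 0 1, TP 0 2}"])
  show "W m (TP 0 3) \<subseteq> {TW, TP 1 2, TP 0 1, TP 0 2}"
proof
  fix x assume "x \<in> W m (TP 0 3)"
  note m = assms
  have x: "x \<in> theta_V (replicate m 4)" "pos m x < 6" "blk m x = 1 \<or> near x (TP 0 3) \<or> near (TP 0 3) x"
    using Wmem[OF \<open>x \<in> W m (TP 0 3)\<close>] by simp_all
  from x(1) show "x \<in> {TW, TP 1 2, TP 0 1, TP 0 2}"
  proof (cases rule: Vcases)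
    case 1 then show ?thesis using x(3) by simp
  next
    case 2 then show ?thesis by simp
  next
    case (3 i) then show ?thesis using x(2,3) m by (simp split: if_splits)
  next
    case (4 i)
    then have "i = 0 \<or> i = 1" using x(2) m by (simp split: if_splits)
    then show ?thesis using 4 by auto
  next
    case (5 i) then show ?thesis using x(2,3) m by (simp split: if_splits)
  qed
qed
  show "card {TW, TP 1 2, TP 0 1, TP 0 2} \<le> m + 1" using assms by simp
qed simp

lemma cost_c1: assumes "3 \<le> m" shows "card (W m (TP 1 3)) \<le> m + 1"
proof (rule Wsub[where T = "{TW, TP 1 2, TP 0 3, TP 1 1}"])
  show "W m (TP 1 3) \<subseteq> {TW, TP 1 2, TP 0 3, TP 1 1}"
  proof
    fix x assume "x \<in> W m (TP 1 3)"
    note x = Wmem[OF this]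
    then show "x \<in> {TW, TP 1 2, TP 0 3, TP 1 1}" using assms
      by (elim conjE Vcases) (auto split: if_splits)
  qed
  show "card {TW, TP 1 2, TP 0 3, TP 1 1} \<le> m + 1" using assms by simp
qed simp

lemma cost_amid: assumes "3 \<le> m" "2 \<le> i" "i \<le> m - 2"
  shows "card (W m (TP i 1)) \<le> m + 1"
proof (rule Wsub[where T = "{TU, TW, TP 0 1, TP 1 1, TP 0 2} \<union> (\<lambda>j. TP j 1) ` {2..<i}"])
  show "W m (TP i 1) \<subseteq> {TU, TW, TP 0 1, TP 1 1, TP 0 2} \<union> (\<lambda>j. TP j 1) ` {2..<i}"
  proof
    fix x assume "x \<in> W m (TP i 1)"
    note x = Wmem[OF this]
    then show "x \<in> {TU, TW, TP 0 1, TP 1 1, TP 0 2} \<union> (\<lambda>j. TP j 1) ` {2..<i}" using assms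
      by (elim conjE Vcases) (auto split: if_splits)
  qed
  have "card ({TU, TW, TP 0 1, TP 1 1, TP 0 2} \<union> (\<lambda>j. TP j 1) ` {2..<i})
      \<le> card {TU, TW, TP 0 1, TP 1 1, TP 0 2} + card ((\<lambda>j. TP j 1) ` {2..<i})"
    by (rule card_Un_le)
  also have "\<dots> \<le> 5 + (i - 2)"
    using card_image_le[of "{2..<i}" "\<lambda>j. TP j 1"] by simp
  finally show "card ({TU, TW, TP 0 1, TP 1 1, TP 0 2} \<union> (\<lambda>j. TP j 1) ` {2..<i}) \<le> m + 1"
    using assms by simp
qed simp

lemma cost_clate: assumes "3 \<le> m" "2 \<le> i" "i \<le> m - 2"
  shows "card (W m (TP i 3)) \<le> m + 1"
proof (rule Wsub[where T = "{TP 1 2, TP 0 3, TP 1 3, TW, TP i 1} \<union> (\<lambda>j. TP j 3) ` {2..<i}"])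
  show "W m (TP i 3) \<subseteq> {TP 1 2, TP 0 3, TP 1 3, TW, TP i 1} \<union> (\<lambda>j. TP j 3) ` {2..<i}"
  proof
    fix x assume "x \<in> W m (TP i 3)"
    note x = Wmem[OF this]
    then show "x \<in> {TP 1 2, TP 0 3, TP 1 3, TW, TP i 1} \<union> (\<lambda>j. TP j 3) ` {2..<i}" using assms
      by (elim conjE Vcases) (auto split: if_splits)
  qed
  have "card ({TP 1 2, TP 0 3, TP 1 3, TW, TP i 1} \<union> (\<lambda>j. TP j 3) ` {2..<i})
      \<le> card {TP 1 2, TP 0 3, TP 1 3, TW, TP i 1} + card ((\<lambda>j. TP j 3) ` {2..<i})"
    by (rule card_Un_le)
  also have "\<dots> \<le> 5 + (i - 2)"
    using card_image_le[of "{2..<i}" "\<lambda>j. TP j 3"] card_ins[of "TP 1 2" "{TP 0 3, TP 1 3, TW, TP i 1}"]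
      card_ins[of "TP 0 3" "{TP 1 3, TW, TP i 1}"] card_ins[of "TP 1 3" "{TW, TP i 1}"]
      card_ins[of "TW" "{TP i 1}"] by simp
  finally show "card ({TP 1 2, TP 0 3, TP 1 3, TW, TP i 1} \<union> (\<lambda>j. TP j 3) ` {2..<i}) \<le> m + 1"
    using assms by simp
qed simp

lemma cost_clast: assumes "3 \<le> m"
  shows "card (W m (TP (m - 1) 3)) \<le> m + 1"
proof (rule Wsub[where T = "{TP 1 2, TP 0 3, TP 1 3, TW} \<union> (\<lambda>j. TP j 3) ` {2..<m-1}"])
  show "W m (TP (m-1) 3) \<subseteq> {TP 1 2, TP 0 3, TP 1 3, TW} \<union> (\<lambda>j. TP j 3) ` {2..<m-1}"
  proof
    fix x assume "x \<in> W m (TP (m-1) 3)"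
    note x = Wmem[OF this]
    then show "x \<in> {TP 1 2, TP 0 3, TP 1 3, TW} \<union> (\<lambda>j. TP j 3) ` {2..<m-1}" using assms
      by (elim conjE Vcases) (auto split: if_splits)
  qed
  have "card ({TP 1 2, TP 0 3, TP 1 3, TW} \<union> (\<lambda>j. TP j 3) ` {2..<m-1})
      \<le> card {TP 1 2, TP 0 3, TP 1 3, TW} + card ((\<lambda>j. TP j 3) ` {2..<m-1})"
    by (rule card_Un_le)
  also have "\<dots> \<le> 4 + (m - 3)"
    using card_image_le[of "{2..<m-1}" "\<lambda>j. TP j 3"] by simp
  finally show "card ({TP 1 2, TP 0 3, TP 1 3, TW} \<union> (\<lambda>j. TP j 3) ` {2..<m-1}) \<le> m + 1"
    using assms by simp
qed simp

lemma cost_alast: assumes "3 \<le> m"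
  shows "card (W m (TP (m - 1) 1)) \<le> m + 1"
proof (rule Wsub[where T = "{TU, TP (m-1) 3} \<union> (\<lambda>j. TP j 1) ` {..<m-1}"])
  show "W m (TP (m-1) 1) \<subseteq> {TU, TP (m-1) 3} \<union> (\<lambda>j. TP j 1) ` {..<m-1}"
  proof
    fix x assume "x \<in> W m (TP (m-1) 1)"
    note x = Wmem[OF this]
    then show "x \<in> {TU, TP (m-1) 3} \<union> (\<lambda>j. TP j 1) ` {..<m-1}" using assms
      by (elim conjE Vcases) (auto split: if_splits)
  qed
  have "card ({TU, TP (m-1) 3} \<union> (\<lambda>j. TP j 1) ` {..<m-1})
      \<le> card {TU, TP (m-1) 3} + card ((\<lambda>j. TP j 1) ` {..<m-1})"
    by (rule card_Un_le)
  also have "\<dots> \<le> 2 + (m - 1)"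
    using card_image_le[of "{..<m-1}" "\<lambda>j. TP j 1"] by simp
  finally show "card ({TU, TP (m-1) 3} \<union> (\<lambda>j. TP j 1) ` {..<m-1}) \<le> m + 1"
    using assms by simp
qed simp

lemma cost_bmid: assumes "3 \<le> m" "2 \<le> i" "i \<le> m - 2"
  shows "card (W m (TP i 2)) \<le> m + 1"
proof (rule Wsub[where T = "{TP (m-1) 1, TU, TW, TP i 1, TP i 3} \<union> (\<lambda>j. TP j 2) ` {2..<i}"])
  show "W m (TP i 2) \<subseteq> {TP (m-1) 1, TU, TW, TP i 1, TP i 3} \<union> (\<lambda>j. TP j 2) ` {2..<i}"
  proof
    fix x assume "x \<in> W m (TP i 2)"
    note x = Wmem[OF this]
    then show "x \<in> {TP (m-1) 1, TU, TW, TP i 1, TP i 3} \<union> (\<lambda>j. TP j 2) ` {2..<i}" using assms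
      by (elim conjE Vcases) (auto split: if_splits)
  qed
  have "card ({TP (m-1) 1, TU, TW, TP i 1, TP i 3} \<union> (\<lambda>j. TP j 2) ` {2..<i})
      \<le> card {TP (m-1) 1, TU, TW, TP i 1, TP i 3} + card ((\<lambda>j. TP j 2) ` {2..<i})"
    by (rule card_Un_le)
  also have "\<dots> \<le> 5 + (i - 2)"
    using card_image_le[of "{2..<i}" "\<lambda>j. TP j 2"] card_ins[of "TP (m-1) 1" "{TU, TW, TP i 1, TP i 3}"]
      card_ins[of "TU" "{TW, TP i 1, TP i 3}"] card_ins[of "TW" "{TP i 1, TP i 3}"]
      card_ins[of "TP i 1" "{TP i 3}"] by simp
  finally show "card ({TP (m-1) 1, TU, TW, TP i 1, TP i 3} \<union> (\<lambda>j. TP j 2) ` {2..<i}) \<le> m + 1"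
    using assms by simp
qed simp

lemma cost_blast: assumes "3 \<le> m"
  shows "card (W m (TP (m-1) 2)) \<le> m + 1"
proof (rule Wsub[where T = "{TP (m-1) 1, TU, TW, TP (m-1) 3} \<union> (\<lambda>j. TP j 2) ` {2..<m-1}"])
  show "W m (TP (m-1) 2) \<subseteq> {TP (m-1) 1, TU, TW, TP (m-1) 3} \<union> (\<lambda>j. TP j 2) ` {2..<m-1}"
  proof
    fix x assume "x \<in> W m (TP (m-1) 2)"
    note x = Wmem[OF this]
    then show "x \<in> {TP (m-1) 1, TU, TW, TP (m-1) 3} \<union> (\<lambda>j. TP j 2) ` {2..<m-1}" using assms
      by (elim conjE Vcases) (auto split: if_splits)
  qed
  have "card ({TP (m-1) 1, TU, TW, TP (m-1) 3} \<union> (\<lambda>j. TP j 2) ` {2..<m-1})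
      \<le> card {TP (m-1) 1, TU, TW, TP (m-1) 3} + card ((\<lambda>j. TP j 2) ` {2..<m-1})"
    by (rule card_Un_le)
  also have "\<dots> \<le> 4 + (m - 3)"
    using card_image_le[of "{2..<m-1}" "\<lambda>j. TP j 2"] card_ins[of "TP (m-1) 1" "{TU, TW, TP (m-1) 3}"]
      card_ins[of "TU" "{TW, TP (m-1) 3}"] card_ins[of "TW" "{TP (m-1) 3}"] by simp
  finally show "card ({TP (m-1) 1, TU, TW, TP (m-1) 3} \<union> (\<lambda>j. TP j 2) ` {2..<m-1}) \<le> m + 1"
    using assms by simp
qed simp


lemma cost_all:
  assumes m: "3 \<le> m" and v: "v \<in> theta_V (replicate m 4)"
  shows "card (W m v) \<le> m + 1"
proof -
  have small: "pos m v \<le> m + 1 \<Longrightarrow> ?thesis" using W_small[OF m, of v] by simp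
  from v show ?thesis
  proof (cases rule: Vcases)
    case 1 then show ?thesis using small m by simp
  next
    case 2 then show ?thesis using small m by simp
  next
    case (3 i)
    consider "i = 0" | "i = 1" | "i = m - 1" | "2 \<le> i" "i \<le> m - 2" using 3 by linarith
    then show ?thesis
    proof cases
      case 1 then show ?thesis using 3 small m by simp
    next
      case 2 then show ?thesis using 3 small m by simp
    next
      case 3 then show ?thesis using \<open>v = TP i 1\<close> cost_alast[OF m] by simp
    next
      case 4 then show ?thesis using \<open>v = TP i 1\<close> cost_amid[OF m] by simp
    qed
  next
    case (4 i)
    consider "i = 0" | "i = 1" | "i = m - 1" | "2 \<le> i" "i \<le> m - 2" using 4 by linarith
    then show ?thesis
    proof cases
      case 1 then show ?thesis using 4 small m by simp
    next
      case 2 then show ?thesis using 4 cost_b1[OF m] by simp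
    next
      case 3 then show ?thesis using \<open>v = TP i 2\<close> cost_blast[OF m] by simp
    next
      case 4 then show ?thesis using \<open>v = TP i 2\<close> cost_bmid[OF m] by simp
    qed
  next
    case (5 i)
    consider "i = 0" | "i = 1" | "i = m - 1" | "2 \<le> i" "i \<le> m - 2" using 5 by linarith
    then show ?thesis
    proof cases
      case 1 then show ?thesis using 5 cost_c0[OF m] by simp
    next
      case 2 then show ?thesis using 5 cost_c1[OF m] by simp
    next
      case 3 then show ?thesis using \<open>v = TP i 3\<close> cost_clast[OF m] by simp
    next
      case 4 then show ?thesis using \<open>v = TP i 3\<close> cost_clate[OF m] by simp
    qed
  qed
qed

lemma blk_in: "blk m x \<in> {0, 1, 2}"
  by (cases x) auto

lemma card_V: "card (theta_V (replicate m 4)) = 3 * m + 2"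
proof -
  have eq: "theta_V (replicate m 4) = insert TU (insert TW ((\<lambda>(i, j). TP i j) ` ({..<m} \<times> {1..3})))"
  proof (rule set_eqI, rule iffI)
    fix x assume "x \<in> theta_V (replicate m 4)"
    then show "x \<in> insert TU (insert TW ((\<lambda>(i, j). TP i j) ` ({..<m} \<times> {1..3})))"
    proof (cases rule: Vcases)
      case (3 i) then show ?thesis by (auto intro!: image_eqI[where x = "(i, 1)"])
    next
      case (4 i) then show ?thesis by (auto intro!: image_eqI[where x = "(i, 2)"])
    next
      case (5 i) then show ?thesis by (auto intro!: image_eqI[where x = "(i, 3)"])
    qed auto
  qed (auto simp: memV)
  have inj: "inj_on (\<lambda>(i, j). TP i j) ({..<m} \<times> {1..3::nat})"
    by (auto simp: inj_on_def)
  have "card ((\<lambda>(i, j). TP i j) ` ({..<m} \<times> {1..3::nat})) = 3 * m"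
    using card_image[OF inj] by (simp add: card_cartesian_product)
  moreover have "TU \<notin> (\<lambda>(i, j). TP i j) ` ({..<m} \<times> {1..3::nat})" by auto
  moreover have "TW \<notin> (\<lambda>(i, j). TP i j) ` ({..<m} \<times> {1..3::nat})" by auto
  moreover have "finite ((\<lambda>(i, j). TP i j) ` ({..<m} \<times> {1..3::nat}))" by simp
  ultimately show ?thesis unfolding eq by simp
qed

theorem lemma3p8:
  fixes m :: nat
  assumes "m \<ge> 3"
  shows "equitably_choosable (theta_V (replicate m 4))
           (square_E (theta_V (replicate m 4)) (theta_E (replicate m 4))) (m + 2)"
  unfolding equitably_choosable_def
proof (intro allI impI)
  fix L :: "tvert \<Rightarrow> nat set"
  assume kL: "k_assignment (theta_V (replicate m 4)) (m + 2) L"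
  define V where "V = theta_V (replicate m 4)"
  define E where "E = square_E (theta_V (replicate m 4)) (theta_E (replicate m 4))"
  define R where "R = (\<lambda>x y. blk m x = blk m y \<or> E x y \<or> E y x)"
  have m: "3 \<le> m" using assms by simp
  have finV: "finite V" by (rule card_ge_0_finite) (simp add: card_V V_def)
  have Lv: "\<forall>v\<in>V. finite (L v) \<and> card (L v) = m + 2"
    using kL unfolding k_assignment_def V_def by simp
  have symR: "\<And>x y. R x y \<Longrightarrow> R y x" unfolding R_def by auto
  have small: "\<forall>v\<in>V. card {x\<in>V. pos m x < pos m v \<and> R x v} < m + 2"
  proof
    fix v assume v: "v \<in> V"
    have "{x\<in>V. pos m x < pos m v \<and> R x v} \<subseteq> W m v"
      unfolding W_def R_def V_def E_def using sq_near by blast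
    then have "card {x\<in>V. pos m x < pos m v \<and> R x v} \<le> card (W m v)"
      by (rule card_mono[rotated]) (simp add: W_def finV[unfolded V_def])
    also have "\<dots> \<le> m + 1" using cost_all[OF m] v V_def by simp
    finally show "card {x\<in>V. pos m x < pos m v \<and> R x v} < m + 2" by simp
  qed
  obtain f where f1: "\<forall>v\<in>V. f v \<in> L v"
    and f2: "\<forall>x\<in>V. \<forall>y\<in>V. x \<noteq> y \<and> R x y \<longrightarrow> f x \<noteq> f y"
    using greedy[OF finV inj_pos[OF m, folded V_def] Lv symR small] by blast
  have proper: "\<forall>x\<in>V. \<forall>y\<in>V. E x y \<longrightarrow> f x \<noteq> f y"
    using f2 unfolding R_def E_def square_E_def by blast
  have cnt: "int (card {v \<in> V. f v = c}) \<le> \<lceil>real (card V) / real (m + 2)\<rceil>" for c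
  proof -
    define C where "C = {v \<in> V. f v = c}"
    have "inj_on (blk m) C"
      using f2 unfolding C_def R_def inj_on_def by blast
    then have "card C = card (blk m ` C)" by (simp add: card_image)
    have "blk m ` C \<subseteq> {0, 1, 2}" by (rule image_subsetI) (rule blk_in)
    then have "card (blk m ` C) \<le> card {0, 1, 2::nat}"
      by (rule card_mono[rotated]) simp
    then have "card C \<le> card {0, 1, 2::nat}" using \<open>card C = card (blk m ` C)\<close> by simp
    also have "\<dots> = 3" by simp
    finally have c3: "card C \<le> 3" .

    have "real (card V) = 3 * real m + 2" using card_V V_def by simp
    then have "2 < real (card V) / real (m + 2)"
      using m by (simp add: pos_less_divide_eq)
    then have "3 \<le> \<lceil>real (card V) / real (m + 2)\<rceil>"
      by (simp add: le_ceiling_iff)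
    moreover have "int (card C) \<le> 3" using c3 by simp
    ultimately show ?thesis unfolding C_def by linarith
  qed
  show "\<exists>f. equitable_L_coloring (theta_V (replicate m 4))
           (square_E (theta_V (replicate m 4)) (theta_E (replicate m 4))) (m + 2) L f"
    unfolding equitable_L_coloring_def
    using f1 proper cnt unfolding V_def E_def by blast
qed

end
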